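(* Let $n=2m$ and let ${\bm c}\in\{1,2\}^n$ be fixed true labels with exactly $m$ nodes in each community. Let $\bm A$ be an undirected adjacency matrix with $A_{ij}=A_{ji}$ and entries $A_{ij}$, $1\le i\le j\le n$, mutually independent with $A_{ij}\sim\mathrm{Bernoulli}(P_{c_ic_j})$, where $\bm P=\frac2m\begin{pmatrix}a&b\\ b&a\end{pmatrix}-\frac1{m^2}\begin{pmatrix}a^2&b^2\\ b^2&a^2\end{pmatrix}$. Let $\delta>1$, $\gamma\in(0,1)\setminus\{\tfrac12\}$ with $\gamma m$ an integer, assume $\frac{(a-b)^2}{a+b}\ge C\log n$ for a sufficiently large constant $C>0$, and assume $2(1+\epsilon)a_\gamma\le\epsilon|(1-2\gamma)(a-b)|$ for some $\epsilon\in(0,1)$, where $a_\gamma=[(1-\gamma)a+\gamma b]I(\gamma>\tfrac12)+[\gamma a+(1-\gamma)b]I(\gamma<\tfrac12)$. Then there exist $\rho\in(0,1)$ and $N>0$ such that for all $n\ge N$ and any ${\bm e}^{(0)}\in\mathcal E^\gamma$, \[ \mathbb P\Big\{\bigcap_{(\hat a,\hat b)\in\mathcal P^\delta_{a,b}}\hat{\bm c}\{{\bm e}^{(0)}\}={\bm c}\Big\}\ge 1-\Big[3ne^{-\frac{(\frac{1-\rho}{4})^2(a-b)^2}{4(a+b)}}+n(n+2)\Big\{e^{-\frac{(\frac{1-\epsilon}{2})^2(2\gamma-1)^2(a-b)^2}{4(a+b)}}+2e^{-\frac{\epsilon^2/2}{1+\epsilon/2}a_\gamma}\Big\}\Big],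 \] where $\hat{\bm c}\{{\bm e}^{(0)}\}={\bm c}$ means equality up to a permutation of the labels $\{1,2\}$.
   Context: $a,b$ may depend on $n$, with $0\le a,b\le m$. $\mathcal E^\gamma$ is the set of ${\bm e}^{(0)}\in\{1,2\}^n$ such that $\#\{i:c_i=1,e^{(0)}_i=1\}=\gamma m$ and $\#\{i:c_i=2,e^{(0)}_i=2\}=\gamma m$. For $\delta>1$, $\mathcal P^\delta_{a,b}$ is the set of pairs $(\hat a,\hat b)$ with $0<\hat a,\hat b<m$ such that $\frac{\hat a}{\hat b}I(a>b)+\frac{\hat b}{\hat a}I(a<b)\ge\delta$. For such $(\hat a,\hat b)$ put $\widehat{\bm P}=\frac2m\begin{pmatrix}\hat a&\hat b\\ \hat b&\hat a\end{pmatrix}-\frac1{m^2}\begin{pmatrix}\hat a^2&\hat b^2\\ \hat b^2&\hat a^2\end{pmatrix}$, $\hat\pi_1=\hat\pi_2=1/2$, and \[ \hat\tau_{il}=\frac{\hat\pi_l\prod_{j=1}^n\widehat P_{le^{(0)}_j}^{A_{ij}}(1-\widehat P_{le^{(0)}_j})^{1-A_{ij}}}{\sum_{l'=1}^2\hat\pi_{l'}\prod_{j=1}^n\widehat P_{l'e^{(0)}_j}^{A_{ij}}(1-\widehat P_{l'e^{(0)}_j})^{1-A_{ij}}}. \] The estimator is $\hat c_j\{{\bm e}^{(0)}\}=\arg\max_{k\in\{1,2\}}\sum_{i=1}^n\sum_{l=1}^2\hat\tau_{il}\{A_{ij}\log\widehat P_{lk}+(1-A_{ij})\log(1-\widehat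 P_{lk})\}$ (it depends on $(\hat a,\hat b)$). *)

theory Defs
  imports Complex_Main
begin

text \<open>Nodes are indexed by 0,...,n-1; labels are 1 and 2.\<close>

definition Pmat :: "real \<Rightarrow> real \<Rightarrow> real \<Rightarrow> nat \<Rightarrow> nat \<Rightarrow> real" where
  "Pmat m a b k l = (if k = l then 2 / m * a - a^2 / m^2 else 2 / m * b - b^2 / m^2)"

definition balanced_labels :: "nat \<Rightarrow> (nat \<Rightarrow> nat) \<Rightarrow> bool" where
  "balanced_labels n c \<longleftrightarrow> (\<forall>i<n. c i \<in> {1,2}) \<and>
     card {i. i < n \<and> c i = 1} = n div 2 \<and> card {i. i < n \<and> c i = 2} = n div 2"

definition adj_mats :: "nat \<Rightarrow> (nat \<Rightarrow> nat \<Rightarrow> bool) set" where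
  "adj_mats n = {A. (\<forall>i j. A i j = A j i) \<and> (\<forall>i j. \<not> (i < n \<and> j < n) \<longrightarrow> \<not> A i j)}"

definition adj_weight :: "nat \<Rightarrow> (nat \<Rightarrow> nat \<Rightarrow> real) \<Rightarrow> (nat \<Rightarrow> nat) \<Rightarrow> (nat \<Rightarrow> nat \<Rightarrow> bool) \<Rightarrow> real" where
  "adj_weight n P c A = (\<Prod>(i,j)\<in>{(i,j). i \<le> j \<and> j < n}.
      (if A i j then P (c i) (c j) else 1 - P (c i) (c j)))"

definition sbm_prob :: "nat \<Rightarrow> (nat \<Rightarrow> nat \<Rightarrow> real) \<Rightarrow> (nat \<Rightarrow> nat) \<Rightarrow> (nat \<Rightarrow> nat \<Rightarrow> bool) set \<Rightarrow> real" where
  "sbm_prob n P c E = (\<Sum>A\<in>adj_mats n \<inter> E. adj_weight n P c A)"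

definition E_gamma :: "nat \<Rightarrow> real \<Rightarrow> (nat \<Rightarrow> nat) \<Rightarrow> (nat \<Rightarrow> nat) set" where
  "E_gamma n \<gamma> c = {e. (\<forall>i<n. e i \<in> {1,2}) \<and>
      real (card {i. i < n \<and> c i = 1 \<and> e i = 1}) = \<gamma> * real (n div 2) \<and>
      real (card {i. i < n \<and> c i = 2 \<and> e i = 2}) = \<gamma> * real (n div 2)}"

definition P_delta :: "real \<Rightarrow> real \<Rightarrow> real \<Rightarrow> real \<Rightarrow> (real \<times> real) set" where
  "P_delta \<delta> m a b = {(ah, bh). 0 < ah \<and> ah < m \<and> 0 < bh \<and> bh < m \<and>
      (ah / bh) * of_bool (a > b) + (bh / ah) * of_bool (a < b) \<ge> \<delta>}"

definition tau_hat :: "nat \<Rightarrow> (nat \<Rightarrow> nat \<Rightarrow> real) \<Rightarrow> (nat \<Rightarrow> nat) \<Rightarrow> (nat \<Rightarrow> nat \<Rightarrow> bool) \<Rightarrow> nat \<Rightarrow> nat \<Rightarrow> real" where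
  "tau_hat n Ph e A i l =
     (let lik = (\<lambda>l'. (1/2::real) * (\<Prod>j<n. if A i j then Ph l' (e j) else 1 - Ph l' (e j)))
      in lik l / (\<Sum>l'\<in>{1,2}. lik l'))"

definition est_score :: "nat \<Rightarrow> (nat \<Rightarrow> nat \<Rightarrow> real) \<Rightarrow> (nat \<Rightarrow> nat) \<Rightarrow> (nat \<Rightarrow> nat \<Rightarrow> bool) \<Rightarrow> nat \<Rightarrow> nat \<Rightarrow> real" where
  "est_score n Ph e A j k = (\<Sum>i<n. \<Sum>l\<in>{1,2}. tau_hat n Ph e A i l *
      (of_bool (A i j) * ln (Ph l k) + (1 - of_bool (A i j)) * ln (1 - Ph l k)))"

text \<open>Estimator c_hat_j = argmax_k score; ties are broken in favour of label 1.\<close>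
definition c_hat :: "nat \<Rightarrow> real \<Rightarrow> real \<Rightarrow> real \<Rightarrow> (nat \<Rightarrow> nat) \<Rightarrow> (nat \<Rightarrow> nat \<Rightarrow> bool) \<Rightarrow> nat \<Rightarrow> nat" where
  "c_hat n m ah bh e A j =
     (let Ph = Pmat m ah bh in if est_score n Ph e A j 1 \<ge> est_score n Ph e A j 2 then 1 else 2)"

definition eq_up_to_perm :: "nat \<Rightarrow> (nat \<Rightarrow> nat) \<Rightarrow> (nat \<Rightarrow> nat) \<Rightarrow> bool" where
  "eq_up_to_perm n x y \<longleftrightarrow> (\<forall>i<n. x i = y i) \<or> (\<forall>i<n. x i = 3 - y i)"

definition a_gamma :: "real \<Rightarrow> real \<Rightarrow> real \<Rightarrow> real" where
  "a_gamma \<gamma> a b = ((1 - \<gamma>) * a + \<gamma> * b) * of_bool (\<gamma> > 1/2) + (\<gamma> * a + (1 - \<gamma>) * b) * of_bool (\<gamma> < 1/2)"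

end

theory Submission
  imports Defs "HOL-Probability.Probability"
begin


lemma exp_quad:
  fixes y :: real assumes "\<bar>y\<bar> \<le> 1" shows "exp y \<le> 1 + y + y^2"
proof (cases "y \<ge> 0")
  case True thus ?thesis using exp_bound[of y] assms by auto
next
  case False
  have "1 - y \<le> exp (-y)" using exp_ge_add_one_self[of "-y"] by simp
  hence "exp y \<le> 1 / (1 - y)" using False by (simp add: exp_minus field_simps)
  also have "\<dots> \<le> 1 + y + y^2"
  proof -
    have eq: "(1 - y) * (1 + y + y^2) = 1 - y * y * y" by (simp add: algebra_simps power2_eq_square)
    have "y * y \<ge> 0" by simp
    hence "y * y * y \<le> 0" by (rule mult_nonneg_nonpos) (use False in simp)
    hence "1 \<le> (1 - y) * (1 + y + y^2)" unfolding eq by simp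
    thus ?thesis using False by (simp add: field_simps)
  qed
  finally show ?thesis .
qed

lemma set_pmf_Pi_finite:
  assumes "finite U"
  shows "finite (set_pmf (Pi_pmf U False (\<lambda>q. bernoulli_pmf (pr q))))"
proof -
  have "set_pmf (Pi_pmf U False (\<lambda>q. bernoulli_pmf (pr q))) \<subseteq> PiE_dflt U False (\<lambda>_. UNIV)"
    using set_Pi_pmf_subset[OF assms, of False "\<lambda>q. bernoulli_pmf (pr q)"] by (auto simp: PiE_dflt_def)
  moreover have "finite (PiE_dflt U False (\<lambda>_. UNIV :: bool set))" using assms by auto
  ultimately show ?thesis by (rule finite_subset)
qed

lemma chernoff:
  fixes U :: "(nat \<times> nat) set" and pr :: "nat \<times> nat \<Rightarrow> real" and W :: "nat set"
    and \<phi> :: "nat \<Rightarrow> nat \<times> nat" and u :: "nat \<Rightarrow> real" and s \<tau> :: real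
  assumes U: "finite U" and W: "finite W" and inj: "inj_on \<phi> W" and sub: "\<phi> ` W \<subseteq> U"
    and pr: "\<And>q. q \<in> U \<Longrightarrow> 0 \<le> pr q \<and> pr q \<le> 1"
    and u: "\<And>w. w \<in> W \<Longrightarrow> \<bar>u w\<bar> \<le> 1" and s: "0 \<le> s" "s \<le> 1"
  shows "measure_pmf.prob (Pi_pmf U False (\<lambda>q. bernoulli_pmf (pr q)))
           {x. (\<Sum>w\<in>W. u w * of_bool (x (\<phi> w))) \<le> (\<Sum>w\<in>W. u w * pr (\<phi> w)) - \<tau>}
         \<le> exp (- s * \<tau> + s^2 * (\<Sum>w\<in>W. pr (\<phi> w)))"
proof -
  define M where "M = Pi_pmf U False (\<lambda>q. bernoulli_pmf (pr q))"
  define Y where "Y = (\<lambda>x. \<Sum>w\<in>W. u w * of_bool (x (\<phi> w)))"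
  define \<mu> where "\<mu> = (\<Sum>w\<in>W. u w * pr (\<phi> w))"
  define V where "V = (\<Sum>w\<in>W. pr (\<phi> w))"
  define S where "S = {x. Y x \<le> \<mu> - \<tau>}"
  have fin: "finite (set_pmf M)" unfolding M_def by (rule set_pmf_Pi_finite[OF U])
  have "measure_pmf.prob M S = measure_pmf.expectation M (indicator S)"
    by simp
  also have "\<dots> \<le> measure_pmf.expectation M (\<lambda>x. exp (s * (\<mu> - \<tau>)) * exp (- s * Y x))"
  proof (rule integral_mono)
    show "integrable (measure_pmf M) (indicator S :: _ \<Rightarrow> real)" by (rule integrable_measure_pmf_finite[OF fin])
    show "integrable (measure_pmf M) (\<lambda>x. exp (s * (\<mu> - \<tau>)) * exp (- s * Y x))" by (rule integrable_measure_pmf_finite[OF fin])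
    fix x
    show "indicator S x \<le> exp (s * (\<mu> - \<tau>)) * exp (- s * Y x)"
    proof (cases "x \<in> S")
      case True
      hence "0 \<le> s * (\<mu> - \<tau>) + (- s * Y x)" using s True mult_left_mono[of "Y x" "\<mu> - \<tau>" s] by (simp add: S_def algebra_simps)
      hence "1 \<le> exp (s * (\<mu> - \<tau>) + (- s * Y x))" by simp
      thus ?thesis using True by (simp add: exp_add[symmetric])
    qed simp
  qed
  also have "\<dots> = exp (s * (\<mu> - \<tau>)) * measure_pmf.expectation M (\<lambda>x. exp (- s * Y x))"
    by simp
  also have "measure_pmf.expectation M (\<lambda>x. exp (- s * Y x)) = (\<Prod>w\<in>W. pr (\<phi> w) * exp (- s * u w) + (1 - pr (\<phi> w)))"
  proof -
    define f where "f = (\<lambda>q (b::bool). if q \<in> \<phi> ` W then exp (- s * u (the_inv_into W \<phi> q) * of_bool b) else 1)"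
    have eq: "exp (- s * Y x) = (\<Prod>q\<in>U. f q (x q))" for x
    proof -
      have "exp (- s * Y x) = (\<Prod>w\<in>W. exp (- s * u w * of_bool (x (\<phi> w))))"
        unfolding Y_def by (simp add: sum_distrib_left exp_sum[OF W, symmetric] algebra_simps)
      also have "\<dots> = (\<Prod>w\<in>W. f (\<phi> w) (x (\<phi> w)))"
        by (rule prod.cong) (auto simp: f_def the_inv_into_f_f[OF inj])
      also have "\<dots> = (\<Prod>q\<in>\<phi> ` W. f q (x q))" by (simp add: prod.reindex[OF inj])
      also have "\<dots> = (\<Prod>q\<in>U. f q (x q))"
        by (rule prod.mono_neutral_left[OF U sub]) (auto simp: f_def)
      finally show ?thesis .
    qed
    have "measure_pmf.expectation M (\<lambda>x. exp (- s * Y x)) = measure_pmf.expectation M (\<lambda>x. \<Prod>q\<in>U. f q (x q))"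
      by (simp only: eq)
    also have "\<dots> = (\<Prod>q\<in>U. measure_pmf.expectation (bernoulli_pmf (pr q)) (f q))"
      unfolding M_def
      by (rule expectation_prod_Pi_pmf[OF U]) (auto simp: f_def integrable_measure_pmf_finite)
    also have "\<dots> = (\<Prod>q\<in>U. f q True * pr q + f q False * (1 - pr q))"
      by (rule prod.cong) (auto simp: pr)
    also have "\<dots> = (\<Prod>q\<in>\<phi> ` W. f q True * pr q + f q False * (1 - pr q))"
      by (rule prod.mono_neutral_left[OF U sub, symmetric]) (auto simp: f_def)
    also have "\<dots> = (\<Prod>w\<in>W. f (\<phi> w) True * pr (\<phi> w) + f (\<phi> w) False * (1 - pr (\<phi> w)))"
      by (simp add: prod.reindex[OF inj])
    also have "\<dots> = (\<Prod>w\<in>W. pr (\<phi> w) * exp (- s * u w) + (1 - pr (\<phi> w)))"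
      by (rule prod.cong) (auto simp: f_def the_inv_into_f_f[OF inj])
    finally show ?thesis .
  qed
  also have "(\<Prod>w\<in>W. pr (\<phi> w) * exp (- s * u w) + (1 - pr (\<phi> w))) \<le> (\<Prod>w\<in>W. exp (pr (\<phi> w) * (- s * u w + s^2)))"
  proof (rule prod_mono, intro conjI)
    fix w assume w: "w \<in> W"
    have p: "0 \<le> pr (\<phi> w)" "pr (\<phi> w) \<le> 1" using pr[of "\<phi> w"] sub w by auto
    show "0 \<le> pr (\<phi> w) * exp (- s * u w) + (1 - pr (\<phi> w))" using p by simp
    have "\<bar>- s * u w\<bar> \<le> 1" using u[OF w] s by (simp add: abs_mult mult_le_one)
    hence E1: "exp (- s * u w) \<le> 1 + (- s * u w) + (- s * u w)^2" by (rule exp_quad)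
    have E2: "(- s * u w)^2 \<le> s^2" using u[OF w] s
    proof -
      have "(u w)^2 \<le> 1" using u[OF w] by (metis abs_le_square_iff abs_one one_power2)
      thus ?thesis by (simp add: power_mult_distrib mult_left_le)
    qed
    have E: "exp (- s * u w) \<le> 1 + (- s * u w + s^2)" using E1 E2 by linarith
    have "pr (\<phi> w) * exp (- s * u w) \<le> pr (\<phi> w) * (1 + (- s * u w + s^2))"
      using E p by (intro mult_left_mono) auto
    hence "pr (\<phi> w) * exp (- s * u w) + (1 - pr (\<phi> w)) \<le> 1 + pr (\<phi> w) * (- s * u w + s^2)"
      by (simp add: algebra_simps)
    also have "\<dots> \<le> exp (pr (\<phi> w) * (- s * u w + s^2))" by simp
    finally show "pr (\<phi> w) * exp (- s * u w) + (1 - pr (\<phi> w)) \<le> exp (pr (\<phi> w) * (- s * u w + s^2))" .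
  qed
  also have "(\<Prod>w\<in>W. exp (pr (\<phi> w) * (- s * u w + s^2))) = exp (- s * \<mu> + s^2 * V)"
  proof -
    have "(\<Sum>w\<in>W. pr (\<phi> w) * (- s * u w + s^2)) = (\<Sum>w\<in>W. (- s) * (u w * pr (\<phi> w)) + s^2 * pr (\<phi> w))"
      by (rule sum.cong) (simp_all add: algebra_simps)
    also have "\<dots> = - s * \<mu> + s^2 * V"
      by (simp only: sum.distrib sum_distrib_left[symmetric] \<mu>_def V_def)
    finally show ?thesis by (simp add: exp_sum[OF W, symmetric])
  qed
  finally have "measure_pmf.prob M S \<le> exp (s * (\<mu> - \<tau>)) * exp (- s * \<mu> + s^2 * V)"
    by (simp add: mult_left_mono)
  also have "\<dots> = exp (- s * \<tau> + s^2 * V)" by (simp add: exp_add[symmetric] algebra_simps)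
  finally show ?thesis by (simp add: M_def S_def Y_def \<mu>_def V_def)
qed



definition toA :: "(nat \<times> nat \<Rightarrow> bool) \<Rightarrow> nat \<Rightarrow> nat \<Rightarrow> bool" where
  "toA x = (\<lambda>i j. x (min i j, max i j))"
definition fromA :: "nat \<Rightarrow> (nat \<Rightarrow> nat \<Rightarrow> bool) \<Rightarrow> nat \<times> nat \<Rightarrow> bool" where
  "fromA n A = (\<lambda>(i,j). if i \<le> j \<and> j < n then A i j else False)"
definition Uset :: "nat \<Rightarrow> (nat \<times> nat) set" where
  "Uset n = {(i,j). i \<le> j \<and> j < n}"
definition prQ :: "(nat \<Rightarrow> nat \<Rightarrow> real) \<Rightarrow> (nat \<Rightarrow> nat) \<Rightarrow> nat \<times> nat \<Rightarrow> real" where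
  "prQ P c = (\<lambda>(i,j). P (c i) (c j))"
definition SBM :: "nat \<Rightarrow> (nat \<Rightarrow> nat \<Rightarrow> real) \<Rightarrow> (nat \<Rightarrow> nat) \<Rightarrow> (nat \<times> nat \<Rightarrow> bool) pmf" where
  "SBM n P c = Pi_pmf (Uset n) False (\<lambda>q. bernoulli_pmf (prQ P c q))"

lemma finite_Uset: "finite (Uset n)"
  by (rule finite_subset[of _ "{..<n} \<times> {..<n}"]) (auto simp: Uset_def)

lemma bridge:
  assumes P: "\<And>i j. 0 \<le> P (c i) (c j) \<and> P (c i) (c j) \<le> 1"
  shows "sbm_prob n P c E = measure_pmf.prob (SBM n P c) {x. toA x \<in> E}"
proof -
  define M where "M = SBM n P c"
  define S' where "S' = PiE_dflt (Uset n) False (\<lambda>_. UNIV) \<inter> {x. toA x \<in> E}"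
  have finS': "finite S'" unfolding S'_def by (rule finite_Int, rule disjI1, rule finite_PiE_dflt[OF finite_Uset]) auto
  have setM: "set_pmf M \<subseteq> PiE_dflt (Uset n) False (\<lambda>_. UNIV)"
    unfolding M_def SBM_def using set_Pi_pmf_subset[OF finite_Uset, of n False]
    by (auto simp: PiE_dflt_def)
  have "sbm_prob n P c E = sum (pmf M) S'"
    unfolding sbm_prob_def
  proof (rule sum.reindex_bij_witness[where i = toA and j = "fromA n"])
    fix A assume A: "A \<in> adj_mats n \<inter> E"
    have sym: "A i j = A j i" for i j using A by (auto simp: adj_mats_def)
    have out1: "A i j \<Longrightarrow> i < n" for i j using A by (auto simp: adj_mats_def)
    have out2: "A i j \<Longrightarrow> j < n" for i j using A by (auto simp: adj_mats_def)
    show "toA (fromA n A) = A"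
      by (intro ext) (auto simp: toA_def fromA_def min_def max_def sym dest: out1 out2)
    thus "fromA n A \<in> S'" using A by (auto simp: S'_def PiE_dflt_def Uset_def fromA_def)
    show "pmf M (fromA n A) = adj_weight n P c A"
      unfolding M_def SBM_def adj_weight_def
      by (subst pmf_Pi'[OF finite_Uset])
         (auto simp: Uset_def fromA_def prQ_def P intro!: prod.cong)
  next
    fix x assume x: "x \<in> S'"
    hence xo: "\<And>q. q \<notin> Uset n \<Longrightarrow> x q = False" by (auto simp: S'_def PiE_dflt_def)
    show "fromA n (toA x) = x"
    proof (rule ext)
      fix q :: "nat \<times> nat"
      obtain i j where q: "q = (i, j)" by (cases q)
      show "fromA n (toA x) q = x q"
        using xo[of "(i,j)"] by (auto simp: q fromA_def toA_def Uset_def min_def max_def)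
    qed
    have "toA x \<in> adj_mats n"
      unfolding adj_mats_def toA_def
    proof (intro CollectI conjI allI impI)
      fix i j show "x (min i j, max i j) = x (min j i, max j i)" by (simp add: min.commute max.commute)
    next
      fix i j assume "\<not> (i < n \<and> j < n)"
      thus "\<not> x (min i j, max i j)" using xo[of "(min i j, max i j)"] by (auto simp: Uset_def)
    qed
    thus "toA x \<in> adj_mats n \<inter> E" using x by (auto simp: S'_def)
  qed
  also have "\<dots> = measure_pmf.prob M S'" by (rule measure_measure_pmf_finite[OF finS', symmetric])
  also have "\<dots> = measure_pmf.prob M {x. toA x \<in> E}"
  proof (rule antisym)
    show "measure_pmf.prob M S' \<le> measure_pmf.prob M {x. toA x \<in> E}"
      by (rule measure_pmf.finite_measure_mono) (auto simp: S'_def)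
    have "measure_pmf.prob M {x. toA x \<in> E} = measure_pmf.prob M ({x. toA x \<in> E} \<inter> set_pmf M)"
      by (simp add: measure_Int_set_pmf)
    also have "\<dots> \<le> measure_pmf.prob M S'"
      by (rule measure_pmf.finite_measure_mono) (use setM in \<open>auto simp: S'_def\<close>)
    finally show "measure_pmf.prob M {x. toA x \<in> E} \<le> measure_pmf.prob M S'" .
  qed
  finally show ?thesis by (simp add: M_def)
qed



lemma tau_diff:
  fixes p q :: real and e :: "nat \<Rightarrow> nat" and A :: "nat \<Rightarrow> nat \<Rightarrow> bool"
  assumes pq: "0 < p" "p < 1" "0 < q" "q < 1"
    and e: "\<forall>j<n. e j \<in> {1,2}"
    and esum: "(\<Sum>j<n. (if e j = 1 then 1 else -1 :: real)) = 0"
  shows "tau_hat n (\<lambda>l k. if l = k then p else q) e A i 1 - tau_hat n (\<lambda>l k. if l = k then p else q) e A i 2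
       = (exp ((ln p - ln q + ln (1 - q) - ln (1 - p)) * (\<Sum>j<n. (if e j = 1 then 1 else -1) * of_bool (A i j))) - 1)
         / (exp ((ln p - ln q + ln (1 - q) - ln (1 - p)) * (\<Sum>j<n. (if e j = 1 then 1 else -1) * of_bool (A i j))) + 1)"
proof -
  define Ph where "Ph = (\<lambda>l k::nat. if l = k then p else q)"
  define t where "t = ln p - ln q + ln (1 - q) - ln (1 - p)"
  define L0 where "L0 = ln (1 - q) - ln (1 - p)"
  define eps where "eps = (\<lambda>j. if e j = 1 then 1 else -1 :: real)"
  define D where "D = (\<Sum>j<n. eps j * of_bool (A i j))"
  define f where "f = (\<lambda>l j. if A i j then Ph l (e j) else 1 - Ph l (e j))"
  define lik where "lik = (\<lambda>l. (1/2::real) * (\<Prod>j<n. f l j))"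
  have fpos: "0 < f l j" for l j using pq by (auto simp: f_def Ph_def)
  have lpos: "0 < lik l" for l unfolding lik_def using fpos by (simp add: prod_pos)
  have per: "f 1 j = f 2 j * exp (eps j * (of_bool (A i j) * t - L0))" if j: "j < n" for j
  proof -
    have tl: "t - L0 = ln p - ln q" by (simp add: t_def L0_def)
    have e1: "exp (ln p - ln q) = p / q" using pq by (simp add: exp_diff)
    have e2: "exp (- (ln p - ln q)) = q / p" using pq by (simp add: exp_diff exp_minus)
    have e3: "exp (- L0) = (1 - p) / (1 - q)" using pq by (simp add: exp_diff exp_minus L0_def)
    have e4: "exp L0 = (1 - q) / (1 - p)" using pq by (simp add: exp_diff L0_def)
    have "e j = 1 \<or> e j = 2" using e j by auto
    thus ?thesis
    proof
      assume ej: "e j = 1"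
      show ?thesis
      proof (cases "A i j")
        case True thus ?thesis using ej pq e1 tl by (simp add: f_def Ph_def eps_def)
      next
        case False thus ?thesis using ej pq e3 by (simp add: f_def Ph_def eps_def)
      qed
    next
      assume ej: "e j = 2"
      show ?thesis
      proof (cases "A i j")
        case True
        have "exp (- (t - L0)) = q / p" using e2 tl by simp
        thus ?thesis using True ej pq by (simp add: f_def Ph_def eps_def)
      next
        case False thus ?thesis using ej pq e4 by (simp add: f_def Ph_def eps_def)
      qed
    qed
  qed
  have "(\<Prod>j<n. f 1 j) = (\<Prod>j<n. f 2 j * exp (eps j * (of_bool (A i j) * t - L0)))"
    by (rule prod.cong) (simp_all only: per lessThan_iff)
  also have "\<dots> = (\<Prod>j<n. f 2 j) * exp (\<Sum>j<n. eps j * (of_bool (A i j) * t - L0))"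
    by (simp add: prod.distrib exp_sum)
  also have "(\<Sum>j<n. eps j * (of_bool (A i j) * t - L0)) = t * D - L0 * (\<Sum>j<n. eps j)"
    by (simp add: D_def sum_distrib_left sum_distrib_right sum_subtractf algebra_simps del: sum_mult_of_bool_eq)
  also have "(\<Sum>j<n. eps j) = 0" using esum by (simp add: eps_def)
  finally have l12: "lik 1 = lik 2 * exp (t * D)" by (simp add: lik_def)
  have tau: "tau_hat n Ph e A i l = lik l / (lik 1 + lik 2)" for l
    by (simp add: tau_hat_def lik_def f_def Let_def)
  have "tau_hat n Ph e A i 1 - tau_hat n Ph e A i 2 = (lik 1 - lik 2) / (lik 1 + lik 2)"
    by (simp add: tau diff_divide_distrib)
  also have "\<dots> = (lik 2 * exp (t * D) - lik 2) / (lik 2 * exp (t * D) + lik 2)"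
    by (simp only: l12)
  also have "\<dots> = (exp (t * D) - 1) / (exp (t * D) + 1)"
  proof -
    have "lik 2 * exp (t * D) - lik 2 = (exp (t * D) - 1) * lik 2"
         "lik 2 * exp (t * D) + lik 2 = (exp (t * D) + 1) * lik 2" by (simp_all add: algebra_simps)
    thus ?thesis using lpos[of 2] by simp
  qed
  finally show ?thesis by (simp add: Ph_def t_def D_def eps_def)
qed

lemma score_diff:
  fixes p q :: real
  shows "est_score n (\<lambda>l k. if l = k then p else q) e A j 1 - est_score n (\<lambda>l k. if l = k then p else q) e A j 2
       = (\<Sum>i<n. (tau_hat n (\<lambda>l k. if l = k then p else q) e A i 1 - tau_hat n (\<lambda>l k. if l = k then p else q) e A i 2)
             * (of_bool (A i j) * (ln p - ln q + ln (1 - q) - ln (1 - p)) - (ln (1 - q) - ln (1 - p))))"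
  unfolding est_score_def sum_subtractf[symmetric]
  apply (rule sum.cong[OF refl])
  subgoal for i by (cases "A i j") (simp_all add: algebra_simps)
  done

lemma tanh_bound:
  fixes x K :: real assumes "K \<le> x"
  shows "1 - 2 * exp (- K) \<le> (exp x - 1) / (exp x + 1)" "(exp x - 1) / (exp x + 1) \<le> 1"
proof -
  have pos: "0 < exp x + 1" by (simp add: add_pos_pos)
  have eq: "(exp x - 1) / (exp x + 1) = 1 - 2 / (exp x + 1)" using pos by (simp add: field_simps)
  have "2 / (exp x + 1) \<le> 2 / exp x" by (rule divide_left_mono) (auto simp: add_pos_pos)
  also have "2 / exp x = 2 * exp (- x)" by (simp add: exp_minus divide_inverse)
  also have "\<dots> \<le> 2 * exp (- K)" using assms by simp
  finally show "1 - 2 * exp (- K) \<le> (exp x - 1) / (exp x + 1)" unfolding eq by simp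
  show "(exp x - 1) / (exp x + 1) \<le> 1" using pos by (simp add: divide_le_eq_1)
qed

lemma tanh_neg_aux: fixes E :: real assumes "0 < E" shows "(1/E - 1)/(1/E + 1) = - ((E - 1)/(E + 1))"
proof -
  have h1: "1/E - 1 = (1-E)/E" "1/E + 1 = (1+E)/E" using assms by (simp_all add: field_simps)
  have "(1-E)/E / ((1+E)/E) = (1-E)/(1+E)" using assms by (auto simp: divide_simps)
  moreover have "(1-E)/(1+E) = - ((E - 1)/(E + 1))"
  proof -
    have "1 + E = E + 1" "1 - E = - (E - 1)" by simp_all
    thus ?thesis by (simp only: minus_divide_left)
  qed
  ultimately show ?thesis unfolding h1 by simp
qed

lemma tanh_neg: fixes y :: real shows "(exp (- y) - 1) / (exp (- y) + 1) = - ((exp y - 1) / (exp y + 1))"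
  using tanh_neg_aux[of "exp y"] by (simp add: exp_minus divide_inverse)

lemma det_main:
  fixes p q \<delta> \<sigma> K :: real and e c :: "nat \<Rightarrow> nat" and A :: "nat \<Rightarrow> nat \<Rightarrow> bool"
  assumes pq: "0 < q" "q \<le> p" "p < 1"
    and odds: "\<delta> * (q * (1 - p)) \<le> p * (1 - q)" and dl: "1 < \<delta>"
    and e: "\<forall>j<n. e j \<in> {1,2}"
    and esum: "(\<Sum>j<n. (if e j = 1 then 1 else -1 :: real)) = 0"
    and ssum: "(\<Sum>i<n. (if c i = 1 then 1 else -1 :: real)) = 0"
    and sym: "\<forall>i j. A i j = A j i"
    and sg: "\<sigma> = 1 \<or> \<sigma> = -1"
    and K: "0 \<le> K" "4 * real n * exp (- (K * ln \<delta>)) < 1"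
    and GD: "\<forall>i<n. K \<le> \<sigma> * (if c i = 1 then 1 else -1) * (\<Sum>j<n. (if e j = 1 then 1 else -1) * of_bool (A i j))"
    and GF: "\<forall>j<n. (1::real) \<le> (\<Sum>i<n. (if c j = 1 then 1 else -1) * (if c i = 1 then 1 else -1) * of_bool (A j i))"
    and j: "j < n"
  shows "0 < \<sigma> * (if c j = 1 then 1 else -1) *
            (est_score n (\<lambda>l k. if l = k then p else q) e A j 1 - est_score n (\<lambda>l k. if l = k then p else q) e A j 2)"
proof -
  define Ph where "Ph = (\<lambda>l k::nat. if l = k then p else q)"
  define t where "t = ln p - ln q + ln (1 - q) - ln (1 - p)"
  define L0 where "L0 = ln (1 - q) - ln (1 - p)"
  define s where "s = (\<lambda>i. if c i = 1 then 1 else -1 :: real)"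
  define D where "D = (\<lambda>i. \<Sum>j<n. (if e j = 1 then 1 else -1) * of_bool (A i j) :: real)"
  define w where "w = (\<lambda>i. tau_hat n Ph e A i 1 - tau_hat n Ph e A i 2)"
  define z where "z = (\<lambda>i. \<sigma> * s i * w i)"
  define \<eta> where "\<eta> = 2 * exp (- (K * ln \<delta>))"
  have p0: "0 < p" using pq by simp
  have s2: "s i * s i = 1" for i by (simp add: s_def)
  have sg2: "\<sigma> * \<sigma> = 1" using sg by auto
  have ln\<delta>: "0 < ln \<delta>" using dl by simp
  have t_ge: "ln \<delta> \<le> t"
  proof -
    have "t = ln (p * (1 - q)) - ln (q * (1 - p))" using pq by (simp add: t_def ln_mult)
    moreover have "ln (\<delta> * (q * (1 - p))) \<le> ln (p * (1 - q))"
      using odds pq dl by (subst ln_le_cancel_iff) (auto intro!: mult_pos_pos)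
    moreover have "ln (\<delta> * (q * (1 - p))) = ln \<delta> + ln (q * (1 - p))"
      using pq dl by (simp add: ln_mult)
    ultimately show ?thesis by simp
  qed
  have tpos: "0 < t" using t_ge ln\<delta> by simp
  have L0: "0 \<le> L0" "L0 \<le> t"
  proof -
    show "0 \<le> L0" using pq by (simp add: L0_def)
    have "ln q \<le> ln p" using pq by simp
    thus "L0 \<le> t" by (simp add: L0_def t_def)
  qed
  have wD: "w i = (exp (t * D i) - 1) / (exp (t * D i) + 1)" for i
    unfolding w_def Ph_def t_def D_def
    by (rule tau_diff) (use pq e esum in auto)
  have zb: "1 - \<eta> \<le> z i \<and> z i \<le> 1" if i: "i < n" for i
  proof -
    have Di: "K \<le> \<sigma> * s i * D i" using GD i by (simp add: s_def D_def)
    define x where "x = t * (\<sigma> * s i * D i)"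
    have "t * K \<le> x" unfolding x_def using Di tpos by (simp add: mult_left_mono)
    moreover have "K * ln \<delta> \<le> t * K" using t_ge K(1) by (simp add: mult_left_mono mult.commute)
    ultimately have Kx: "K * ln \<delta> \<le> x" by simp
    have zx: "z i = (exp x - 1) / (exp x + 1)"
    proof -
      have "\<sigma> * s i = 1 \<or> \<sigma> * s i = -1" using sg by (auto simp: s_def)
      thus ?thesis
      proof
        assume h: "\<sigma> * s i = 1"
        show ?thesis unfolding z_def x_def wD h by simp
      next
        assume h: "\<sigma> * s i = -1"
        have "x = - (t * D i)" unfolding x_def h by simp
        thus ?thesis unfolding z_def wD h by (simp add: tanh_neg minus_divide_left)
      qed
    qed
    show ?thesis using tanh_bound[OF Kx] by (simp add: zx \<eta>_def)
  qed
  have wz: "\<sigma> * s j * w i = s j * s i * z i" for i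
  proof -
    have "s j * s i * z i = \<sigma> * s j * w i * (s i * s i)" by (simp add: z_def algebra_simps)
    also have "\<dots> = \<sigma> * s j * w i" using s2[of i] by simp
    finally show ?thesis by (simp only: mult.commute)
  qed
  have diff: "est_score n Ph e A j 1 - est_score n Ph e A j 2 = (\<Sum>i<n. w i * (of_bool (A i j) * t - L0))"
    unfolding Ph_def w_def t_def L0_def by (rule score_diff)
  have E0: "\<sigma> * s j * (est_score n Ph e A j 1 - est_score n Ph e A j 2)
        = t * (\<Sum>i<n. s j * s i * z i * of_bool (A j i)) - L0 * (s j * (\<Sum>i<n. s i * z i))"
    unfolding diff
  proof -
    have "\<sigma> * s j * (\<Sum>i<n. w i * (of_bool (A i j) * t - L0)) = (\<Sum>i<n. (s j * s i * z i) * (of_bool (A j i) * t - L0))"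
      unfolding sum_distrib_left
    proof (rule sum.cong[OF refl])
      fix i
      have "\<sigma> * s j * (w i * (of_bool (A i j) * t - L0)) = (\<sigma> * s j * w i) * (of_bool (A i j) * t - L0)" by simp
      also have "\<dots> = (s j * s i * z i) * (of_bool (A j i) * t - L0)" unfolding wz by (subst sym[rule_format, of i j]) (rule refl)
      finally show "\<sigma> * s j * (w i * (of_bool (A i j) * t - L0)) = (s j * s i * z i) * (of_bool (A j i) * t - L0)" .
    qed
    also have "\<dots> = t * (\<Sum>i<n. s j * s i * z i * of_bool (A j i)) - L0 * (s j * (\<Sum>i<n. s i * z i))"
      by (simp add: sum_subtractf sum_distrib_left algebra_simps del: sum_mult_of_bool_eq)
    finally show "\<sigma> * s j * (\<Sum>i<n. w i * (of_bool (A i j) * t - L0)) = t * (\<Sum>i<n. s j * s i * z i * of_bool (A j i)) - L0 * (s j * (\<Sum>i<n. s i * z i))" .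
  qed
  have E1: "t * (\<Sum>i<n. s j * s i * z i * of_bool (A j i)) - L0 * (s j * (\<Sum>i<n. s i * z i)) \<ge> t * (1 - real n * \<eta>) - L0 * (real n * \<eta>)"
  proof -
    have A1: "(\<Sum>i<n. s j * s i * z i * of_bool (A j i)) \<ge> 1 - real n * \<eta>"
    proof -
      have "(\<Sum>i<n. s j * s i * z i * of_bool (A j i)) =
            (\<Sum>i<n. s j * s i * of_bool (A j i)) - (\<Sum>i<n. s j * s i * (1 - z i) * of_bool (A j i))"
        by (simp add: sum_subtractf[symmetric] algebra_simps del: sum_mult_of_bool_eq)
      moreover have "(\<Sum>i<n. s j * s i * of_bool (A j i)) \<ge> 1" using GF j unfolding s_def by blast
      moreover have "(\<Sum>i<n. s j * s i * (1 - z i) * of_bool (A j i)) \<le> (\<Sum>i<n::nat. \<eta>)"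
      proof (rule sum_mono)
        fix i assume "i \<in> {..<n}"
        hence zi: "1 - \<eta> \<le> z i" "z i \<le> 1" using zb by auto
        have "s j * s i * (1 - z i) * of_bool (A j i) \<le> \<bar>s j * s i * (1 - z i) * of_bool (A j i)\<bar>" by simp
        also have "\<dots> \<le> 1 - z i" using zi by (simp add: s_def abs_mult)
        also have "\<dots> \<le> \<eta>" using zi by simp
        finally show "s j * s i * (1 - z i) * of_bool (A j i) \<le> \<eta>" .
      qed
      ultimately show ?thesis by simp
    qed
    have A2: "s j * (\<Sum>i<n. s i * z i) \<le> real n * \<eta>"
    proof -
      have "(\<Sum>i<n. s i * z i) = (\<Sum>i<n. s i) - (\<Sum>i<n. s i * (1 - z i))"
        by (simp add: sum_subtractf[symmetric] algebra_simps)
      hence eq: "(\<Sum>i<n. s i * z i) = - (\<Sum>i<n. s i * (1 - z i))" using ssum by (simp add: s_def)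
      have "\<bar>\<Sum>i<n. s i * (1 - z i)\<bar> \<le> (\<Sum>i<n::nat. \<eta>)"
      proof (rule order_trans[OF sum_abs], rule sum_mono)
        fix i assume "i \<in> {..<n}"
        hence zi: "1 - \<eta> \<le> z i" "z i \<le> 1" using zb by auto
        show "\<bar>s i * (1 - z i)\<bar> \<le> \<eta>" using zi by (simp add: s_def abs_mult)
      qed
      moreover have "\<bar>s j * (\<Sum>i<n. s i * z i)\<bar> = \<bar>\<Sum>i<n. s i * (1 - z i)\<bar>"
      proof -
        have sj: "\<bar>s j\<bar> = 1" by (simp add: s_def)
        show ?thesis by (simp only: abs_mult sj eq abs_minus_cancel mult_1)
      qed
      ultimately have "\<bar>s j * (\<Sum>i<n. s i * z i)\<bar> \<le> real n * \<eta>" by simp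
      thus ?thesis by simp
    qed
    have "t * (1 - real n * \<eta>) \<le> t * (\<Sum>i<n. s j * s i * z i * of_bool (A j i))"
      using A1 tpos by (simp add: mult_left_mono)
    moreover have "L0 * (s j * (\<Sum>i<n. s i * z i)) \<le> L0 * (real n * \<eta>)"
      using A2 L0 by (simp add: mult_left_mono)
    ultimately show ?thesis by simp
  qed
  have E2: "t * (1 - real n * \<eta>) - L0 * (real n * \<eta>) \<ge> t * (1 - 2 * real n * \<eta>)"
  proof -
    have "0 \<le> real n * \<eta>" by (simp add: \<eta>_def)
    hence "L0 * (real n * \<eta>) \<le> t * (real n * \<eta>)" using L0 by (simp add: mult_right_mono)
    thus ?thesis by (simp add: algebra_simps)
  qed
  have E3: "t * (1 - 2 * real n * \<eta>) > 0" using K(2) tpos by (simp add: \<eta>_def)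
  have "0 < \<sigma> * s j * (est_score n Ph e A j 1 - est_score n Ph e A j 2)" using E0 E1 E2 E3 by linarith
  thus ?thesis by (simp add: Ph_def s_def)
qed



lemma ab_core:
  fixes a b g \<epsilon> :: real
  assumes g: "1/2 < g" "g < 1" and ab: "0 \<le> a" "0 \<le> b" "0 < a + b" and e: "0 < \<epsilon>" "\<epsilon> < 1"
    and H: "2 * (1 + \<epsilon>) * ((1 - g) * a + g * b) \<le> \<epsilon> * ((2 * g - 1) * \<bar>a - b\<bar>)"
  shows "b < a \<and> 4 * b \<le> a"
proof -
  have L: "2 * (1 + \<epsilon>) * (g * b) \<le> 2 * (1 + \<epsilon>) * ((1 - g) * a + g * b)"
    using g ab e by (intro mult_left_mono) auto
  have ba: "b < a"
  proof (rule ccontr)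
    assume "\<not> b < a"
    hence "\<bar>a - b\<bar> \<le> b" using ab by auto
    hence "\<epsilon> * ((2 * g - 1) * \<bar>a - b\<bar>) \<le> \<epsilon> * ((2 * g - 1) * b)"
      using g e by (intro mult_left_mono) auto
    with L H have "2 * (1 + \<epsilon>) * (g * b) \<le> \<epsilon> * ((2 * g - 1) * b)" by linarith
    hence "(2 * (1 + \<epsilon>) * g - \<epsilon> * (2 * g - 1)) * b \<le> 0" by (simp add: algebra_simps)
    moreover have "0 < 2 * (1 + \<epsilon>) * g - \<epsilon> * (2 * g - 1)" using g e by (simp add: algebra_simps)
    ultimately have "b \<le> 0" by (simp add: mult_le_0_iff)
    thus False using ab \<open>\<not> b < a\<close> by linarith
  qed
  have "(2 * g - 1) * \<bar>a - b\<bar> \<le> g * a"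
    by (rule mult_mono) (use g ab ba in auto)
  hence "\<epsilon> * ((2 * g - 1) * \<bar>a - b\<bar>) \<le> \<epsilon> * (g * a)"
    using e by (intro mult_left_mono) auto
  with L H have "2 * (1 + \<epsilon>) * (g * b) \<le> \<epsilon> * (g * a)" by linarith
  hence "g * (2 * (1 + \<epsilon>) * b) \<le> g * (\<epsilon> * a)" by (simp add: algebra_simps)
  hence "2 * (1 + \<epsilon>) * b \<le> \<epsilon> * a" using g by (simp add: mult_le_cancel_left_pos)
  moreover have "0 \<le> (1 - \<epsilon>) * a" using e ab by simp
  ultimately have "0 \<le> (1 + \<epsilon>) * (a - 4 * b)" by (simp add: algebra_simps)
  hence "0 \<le> a - 4 * b" using e by (simp add: zero_le_mult_iff)
  thus ?thesis using ba by linarith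
qed

lemma ab_bounds:
  fixes a b \<gamma> \<epsilon> :: real
  assumes g: "0 < \<gamma>" "\<gamma> < 1" "\<gamma> \<noteq> 1/2" and ab: "0 \<le> a" "0 \<le> b" "0 < a + b" and e: "0 < \<epsilon>" "\<epsilon> < 1"
    and H: "2 * (1 + \<epsilon>) * a_gamma \<gamma> a b \<le> \<epsilon> * \<bar>(1 - 2 * \<gamma>) * (a - b)\<bar>"
  shows "b < a \<and> 4 * b \<le> a"
proof (cases "\<gamma> > 1/2")
  case True
  have "a_gamma \<gamma> a b = (1 - \<gamma>) * a + \<gamma> * b" using True by (simp add: a_gamma_def)
  moreover have "\<bar>(1 - 2 * \<gamma>) * (a - b)\<bar> = (2 * \<gamma> - 1) * \<bar>a - b\<bar>" using True by (simp add: abs_mult)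
  ultimately show ?thesis using ab_core[of \<gamma> a b \<epsilon>] True g ab e H by simp
next
  case False
  hence F: "\<gamma> < 1/2" using g by simp
  have "a_gamma \<gamma> a b = (1 - (1 - \<gamma>)) * a + (1 - \<gamma>) * b" using F by (simp add: a_gamma_def)
  moreover have "\<bar>(1 - 2 * \<gamma>) * (a - b)\<bar> = (2 * (1 - \<gamma>) - 1) * \<bar>a - b\<bar>" using F by (simp add: abs_mult)
  ultimately show ?thesis using ab_core[of "1 - \<gamma>" a b \<epsilon>] F g ab e H by simp
qed

lemma pm_bounds:
  fixes m a :: real assumes "0 < m" "0 \<le> a" "a \<le> m"
  shows "0 \<le> 2 / m * a - a^2 / m^2" "2 / m * a - a^2 / m^2 \<le> 1" "2 / m * a - a^2 / m^2 \<le> 2 / m * a"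
proof -
  have eq: "2 / m * a - a^2 / m^2 = 1 - (1 - a/m)^2" using assms by (simp add: field_simps power2_eq_square)
  have "0 \<le> a / m" "a / m \<le> 1" using assms by auto
  hence "(1 - a/m)^2 \<le> 1" by (simp add: power_le_one)
  thus "0 \<le> 2 / m * a - a^2 / m^2" using eq by simp
  show "2 / m * a - a^2 / m^2 \<le> 1" using eq by simp
  show "2 / m * a - a^2 / m^2 \<le> 2 / m * a" using assms by simp
qed

lemma pm_strict:
  fixes m a :: real assumes "0 < m" "0 < a" "a < m"
  shows "0 < 2 / m * a - a^2 / m^2" "2 / m * a - a^2 / m^2 < 1"
proof -
  have eq: "2 / m * a - a^2 / m^2 = 1 - (1 - a/m)^2" using assms by (simp add: field_simps power2_eq_square)
  have "0 < a / m" "a / m < 1" using assms by auto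
  hence "0 < 1 - a/m" "1 - a/m < 1" by auto
  hence "(1 - a/m) * (1 - a/m) < 1 * 1" by (intro mult_strict_mono) auto
  hence "(1 - a/m)^2 < 1" "0 < (1 - a/m)^2" using \<open>0 < 1 - a/m\<close> by (simp_all add: power2_eq_square)
  thus "0 < 2 / m * a - a^2 / m^2" "2 / m * a - a^2 / m^2 < 1" using eq by simp_all
qed

lemma pm_diff:
  fixes m a b :: real assumes "0 < m"
  shows "m * ((2 / m * a - a^2 / m^2) - (2 / m * b - b^2 / m^2)) = (a - b) * (2 - (a + b) / m)"
  using assms by (simp add: field_simps power2_eq_square)

lemma pm_mono:
  fixes m a b :: real assumes "0 < m" "0 \<le> b" "b \<le> a" "a \<le> m"
  shows "2 / m * b - b^2 / m^2 \<le> 2 / m * a - a^2 / m^2"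
proof -
  have "0 \<le> (a - b) * (2 - (a + b) / m)"
  proof (rule mult_nonneg_nonneg)
    show "0 \<le> a - b" using assms by simp
    have "(a + b) / m \<le> 2" using assms by (simp add: divide_le_eq)
    thus "0 \<le> 2 - (a + b) / m" by simp
  qed
  hence "0 \<le> m * ((2 / m * a - a^2 / m^2) - (2 / m * b - b^2 / m^2))" using pm_diff[OF assms(1)] by simp
  thus ?thesis using assms(1) by (simp add: zero_le_mult_iff)
qed

lemma odds_bound:
  fixes m ah bh \<delta> :: real assumes m: "0 < m" and h: "0 < bh" "bh < ah" "ah < m" and d: "\<delta> * bh \<le> ah" "0 < \<delta>"
  shows "\<delta> * ((2 / m * bh - bh^2 / m^2) * (1 - (2 / m * ah - ah^2 / m^2)))
         \<le> (2 / m * ah - ah^2 / m^2) * (1 - (2 / m * bh - bh^2 / m^2))"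
proof -
  define x where "x = ah / m"
  define y where "y = bh / m"
  have xy: "0 < y" "y < x" "x < 1" "\<delta> * y \<le> x" using h m d by (auto simp: x_def y_def divide_strict_right_mono field_simps)
  have P: "2 / m * ah - ah^2 / m^2 = x * (2 - x)" "2 / m * bh - bh^2 / m^2 = y * (2 - y)"
    using m by (simp_all add: x_def y_def field_simps power2_eq_square)
  have Q: "1 - x * (2 - x) = (1 - x)^2" "1 - y * (2 - y) = (1 - y)^2" by (simp_all add: power2_eq_square algebra_simps)
  have key: "(2 - y) * (1 - x)^2 \<le> (2 - x) * (1 - y)^2"
  proof -
    define X where "X = 1 - x"
    define Y where "Y = 1 - y"
    have XY: "0 < X" "X < Y" "Y < 1" using xy by (auto simp: X_def Y_def)
    have "(2 - x) * (1 - y)^2 - (2 - y) * (1 - x)^2 = (Y - X) * (Y + X + X * Y)"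
      by (simp add: X_def Y_def power2_eq_square algebra_simps)
    moreover have "0 \<le> (Y - X) * (Y + X + X * Y)" using XY by (intro mult_nonneg_nonneg) auto
    ultimately show ?thesis by simp
  qed
  have "\<delta> * (y * (2 - y) * (1 - x)^2) = (\<delta> * y) * ((2 - y) * (1 - x)^2)" by simp
  also have "\<dots> \<le> x * ((2 - y) * (1 - x)^2)" using xy by (intro mult_right_mono) auto
  also have "\<dots> \<le> x * ((2 - x) * (1 - y)^2)" using key xy by (intro mult_left_mono) auto
  finally show ?thesis unfolding P Q by (simp add: algebra_simps)
qed



lemma det_incl:
  fixes \<delta> mr a b \<sigma> K :: real and e c :: "nat \<Rightarrow> nat" and A :: "nat \<Rightarrow> nat \<Rightarrow> bool"
  assumes dl: "1 < \<delta>" and mr: "0 < mr" and ba: "b < a"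
    and sg: "\<sigma> = 1 \<or> \<sigma> = -1"
    and e: "\<forall>j<n. e j \<in> {1,2}" and c: "\<forall>j<n. c j \<in> {1,2}"
    and esum: "(\<Sum>j<n. (if e j = 1 then 1 else -1 :: real)) = 0"
    and ssum: "(\<Sum>i<n. (if c i = 1 then 1 else -1 :: real)) = 0"
    and sym: "\<forall>i j. A i j = A j i"
    and K: "0 \<le> K" "4 * real n * exp (- (K * ln \<delta>)) < 1"
    and GD: "\<forall>i<n. K \<le> \<sigma> * (if c i = 1 then 1 else -1) * (\<Sum>j<n. (if e j = 1 then 1 else -1) * of_bool (A i j))"
    and GF: "\<forall>j<n. (1::real) \<le> (\<Sum>i<n. (if c j = 1 then 1 else -1) * (if c i = 1 then 1 else -1) * of_bool (A j i))"
  shows "\<forall>(ah, bh)\<in>P_delta \<delta> mr a b. eq_up_to_perm n (c_hat n mr ah bh e A) c"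
proof (clarify)
  fix ah bh assume H: "(ah, bh) \<in> P_delta \<delta> mr a b"
  hence h: "0 < ah" "ah < mr" "0 < bh" "bh < mr" "\<delta> \<le> ah / bh" using ba by (auto simp: P_delta_def)
  have d1: "\<delta> * bh \<le> ah" using h by (simp add: le_divide_eq)
  have "1 * bh < \<delta> * bh" using dl h by (intro mult_strict_right_mono) auto
  hence bhah: "bh < ah" using d1 by simp
  define p where "p = 2 / mr * ah - ah^2 / mr^2"
  define q where "q = 2 / mr * bh - bh^2 / mr^2"
  have Peq: "Pmat mr ah bh = (\<lambda>l k. if l = k then p else q)" by (intro ext) (simp add: Pmat_def p_def q_def)
  have q0: "0 < q" using pm_strict[of mr bh] mr h by (simp add: q_def)
  have p1: "p < 1" using pm_strict[of mr ah] mr h by (simp add: p_def)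
  have qp: "q \<le> p" using pm_mono[of mr bh ah] mr h bhah by (simp add: p_def q_def)
  have odds: "\<delta> * (q * (1 - p)) \<le> p * (1 - q)"
    using odds_bound[of mr bh ah \<delta>] mr h bhah d1 dl by (simp add: p_def q_def)
  have pos: "0 < \<sigma> * (if c j = 1 then 1 else -1) *
            (est_score n (\<lambda>l k. if l = k then p else q) e A j 1 - est_score n (\<lambda>l k. if l = k then p else q) e A j 2)"
    if j: "j < n" for j
    by (rule det_main[OF q0 qp p1 odds dl e esum ssum sym sg K GD GF j])
  have chat: "c_hat n mr ah bh e A j = (if est_score n (\<lambda>l k. if l = k then p else q) e A j 1 \<ge> est_score n (\<lambda>l k. if l = k then p else q) e A j 2 then 1 else 2)" for j
    by (simp add: c_hat_def Peq Let_def)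
  show "eq_up_to_perm n (c_hat n mr ah bh e A) c"
    using sg
  proof
    assume s1: "\<sigma> = 1"
    have "c_hat n mr ah bh e A j = c j" if j: "j < n" for j
    proof -
      have cj: "c j = 1 \<or> c j = 2" using c j by auto
      thus ?thesis using pos[OF j] s1 by (auto simp: chat zero_less_mult_iff)
    qed
    thus ?thesis by (simp add: eq_up_to_perm_def)
  next
    assume s1: "\<sigma> = -1"
    have "c_hat n mr ah bh e A j = 3 - c j" if j: "j < n" for j
    proof -
      have cj: "c j = 1 \<or> c j = 2" using c j by auto
      thus ?thesis using pos[OF j] s1 by (auto simp: chat zero_less_mult_iff)
    qed
    thus ?thesis by (simp add: eq_up_to_perm_def)
  qed
qed



definition cnt :: "nat \<Rightarrow> (nat \<Rightarrow> nat) \<Rightarrow> (nat \<Rightarrow> nat) \<Rightarrow> nat \<Rightarrow> nat \<Rightarrow> real" where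
  "cnt n c e k l = real (card {w. w < n \<and> c w = k \<and> e w = l})"

lemma card_Suc_filter: "card {w. w < Suc n \<and> P w} = card {w. w < n \<and> P w} + (if P n then 1 else 0)"
proof (cases "P n")
  case True
  have "{w. w < Suc n \<and> P w} = insert n {w. w < n \<and> P w}" using True by auto
  thus ?thesis using True by simp
next
  case False
  have "{w. w < Suc n \<and> P w} = {w. w < n \<and> P w}" using False less_Suc_eq by auto
  thus ?thesis using False by simp
qed

lemma class_sum:
  fixes g :: "nat \<Rightarrow> nat \<Rightarrow> real"
  assumes "\<forall>w<n. c w \<in> {1,2} \<and> e w \<in> {1,2}"
  shows "(\<Sum>w<n. g (c w) (e w)) = cnt n c e 1 1 * g 1 1 + cnt n c e 1 2 * g 1 2 + cnt n c e 2 1 * g 2 1 + cnt n c e 2 2 * g 2 2"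
  using assms
proof (induction n)
  case 0 thus ?case by (simp add: cnt_def)
next
  case (Suc n)
  have IH: "(\<Sum>w<n. g (c w) (e w)) = cnt n c e 1 1 * g 1 1 + cnt n c e 1 2 * g 1 2 + cnt n c e 2 1 * g 2 1 + cnt n c e 2 2 * g 2 2"
    using Suc by auto
  have ce: "c n \<in> {1,2}" "e n \<in> {1,2}" using Suc.prems by auto
  have cs: "cnt (Suc n) c e k l = cnt n c e k l + (if c n = k \<and> e n = l then 1 else 0)" for k l
    unfolding cnt_def by (subst card_Suc_filter) simp
  show ?case using ce by (auto simp: IH cs algebra_simps)
qed

lemma sums:
  fixes p0 q0 g m :: real
  assumes ce: "\<forall>w<n. c w \<in> {1,2} \<and> e w \<in> {1,2}"
    and h: "cnt n c e 1 1 = g" "cnt n c e 2 2 = g" "cnt n c e 1 1 + cnt n c e 1 2 = m" "cnt n c e 2 1 + cnt n c e 2 2 = m"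
    and k: "k \<in> {1,2}"
  shows "(\<Sum>w<n. (if c w = 1 then 1 else -1 :: real)) = 0"
    "(\<Sum>w<n. (if e w = 1 then 1 else -1 :: real)) = 0"
    "(\<Sum>w<n. (if k = 1 then 1 else -1) * (if e w = 1 then 1 else -1) * (if k = c w then p0 else q0)) = (2*g - m) * (p0 - q0)"
    "(\<Sum>w<n. (if k = 1 then 1 else -1) * (if c w = 1 then 1 else -1) * (if k = c w then p0 else q0)) = m * (p0 - q0)"
    "(\<Sum>w<n. (if k = c w then p0 else q0)) = m * (p0 + q0)"
proof -
  have h12: "cnt n c e 1 2 = m - g" and h21: "cnt n c e 2 1 = m - g" using h by linarith+
  show "(\<Sum>w<n. (if c w = 1 then 1 else -1 :: real)) = 0"
    using class_sum[OF ce, of "\<lambda>k l. if k = 1 then 1 else -1"] h h12 h21 by simp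
  show "(\<Sum>w<n. (if e w = 1 then 1 else -1 :: real)) = 0"
    using class_sum[OF ce, of "\<lambda>k l. if l = 1 then 1 else -1"] h h12 h21 by simp
  show "(\<Sum>w<n. (if k = 1 then 1 else -1) * (if e w = 1 then 1 else -1) * (if k = c w then p0 else q0)) = (2*g - m) * (p0 - q0)"
    using class_sum[OF ce, of "\<lambda>kk l. (if k = 1 then 1 else -1) * (if l = 1 then 1 else -1) * (if k = kk then p0 else q0)"] h h12 h21 k
    by (auto simp: algebra_simps)
  show "(\<Sum>w<n. (if k = 1 then 1 else -1) * (if c w = 1 then 1 else -1) * (if k = c w then p0 else q0)) = m * (p0 - q0)"
    using class_sum[OF ce, of "\<lambda>kk l. (if k = 1 then 1 else -1) * (if kk = 1 then 1 else -1) * (if k = kk then p0 else q0)"] h h12 h21 k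
    by (auto simp: algebra_simps)
  show "(\<Sum>w<n. (if k = c w then p0 else q0)) = m * (p0 + q0)"
    using class_sum[OF ce, of "\<lambda>kk l. (if k = kk then p0 else q0)"] h h12 h21 k
    by (auto simp: algebra_simps)
qed



lemma vertex_tail:
  fixes P :: "nat \<Rightarrow> nat \<Rightarrow> real" and u :: "nat \<Rightarrow> real" and s \<tau> :: real
  assumes v: "v < n" and P: "\<And>k l. 0 \<le> P k l \<and> P k l \<le> 1" and Ps: "\<And>k l. P k l = P l k"
    and u: "\<And>w. \<bar>u w\<bar> \<le> 1" and s: "0 \<le> s" "s \<le> 1"
  shows "measure_pmf.prob (SBM n P c) {x. (\<Sum>w<n. u w * of_bool (toA x v w)) \<le> (\<Sum>w<n. u w * P (c v) (c w)) - \<tau>}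
         \<le> exp (- s * \<tau> + s^2 * (\<Sum>w<n. P (c v) (c w)))"
proof -
  define \<phi> where "\<phi> = (\<lambda>w. (min v w, max v w))"
  have inj: "inj_on \<phi> {..<n}" by (auto simp: inj_on_def \<phi>_def min_def max_def split: if_splits)
  have sub: "\<phi> ` {..<n} \<subseteq> Uset n" using v by (auto simp: \<phi>_def Uset_def min_def max_def)
  have pr: "\<And>q. q \<in> Uset n \<Longrightarrow> 0 \<le> prQ P c q \<and> prQ P c q \<le> 1" by (auto simp: prQ_def P)
  have pr\<phi>: "prQ P c (\<phi> w) = P (c v) (c w)" for w by (auto simp: prQ_def \<phi>_def min_def max_def Ps)
  have tA: "toA x v w = x (\<phi> w)" for x w by (simp add: toA_def \<phi>_def)
  have main: "measure_pmf.prob (Pi_pmf (Uset n) False (\<lambda>q. bernoulli_pmf (prQ P c q)))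
           {x. (\<Sum>w\<in>{..<n}. u w * of_bool (x (\<phi> w))) \<le> (\<Sum>w\<in>{..<n}. u w * prQ P c (\<phi> w)) - \<tau>}
         \<le> exp (- s * \<tau> + s^2 * (\<Sum>w\<in>{..<n}. prQ P c (\<phi> w)))"
    by (rule chernoff[OF finite_Uset _ inj sub pr _ s]) (auto simp: u)
  have e1: "(\<Sum>w\<in>{..<n}. prQ P c (\<phi> w)) = (\<Sum>w<n. P (c v) (c w))"
    by (rule sum.cong) (simp_all only: pr\<phi>)
  have e2: "(\<Sum>w\<in>{..<n}. u w * prQ P c (\<phi> w)) = (\<Sum>w<n. u w * P (c v) (c w))"
    by (rule sum.cong) (simp_all only: pr\<phi>)
  have e3: "{x. (\<Sum>w\<in>{..<n}. u w * of_bool (x (\<phi> w))) \<le> (\<Sum>w<n. u w * P (c v) (c w)) - \<tau>}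
     = {x. (\<Sum>w<n. u w * of_bool (toA x v w)) \<le> (\<Sum>w<n. u w * P (c v) (c w)) - \<tau>}"
    by (simp only: tA)
  show ?thesis using main[unfolded e1 e2 e3] unfolding SBM_def .
qed

lemma ln_ge_8: assumes "10000 \<le> x" shows "8 \<le> ln (x::real)"
proof -
  have "exp (8::real) = exp 1 ^ 8" using exp_of_nat_mult[of 8 "1::real"] by simp
  also have "\<dots> \<le> 3 ^ 8" by (rule power_mono[OF exp_le]) simp
  also have "\<dots> \<le> x" using assms by simp
  finally have "exp 8 \<le> x" .
  thus ?thesis using assms by (subst ln_ge_iff) auto
qed

lemma core:
  fixes \<delta> \<gamma> \<epsilon> \<kappa> C a b :: real and n :: nat and c e :: "nat \<Rightarrow> nat"
  assumes dl: "1 < \<delta>" and g: "0 < \<gamma>" "\<gamma> < 1" "\<gamma> \<noteq> 1/2"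
    and \<kappa>: "\<kappa> = \<bar>2 * \<gamma> - 1\<bar> * 9 / 16" and C: "C = max 8 (8 / (\<kappa> * ln \<delta>))"
    and ep: "0 < \<epsilon>" "\<epsilon> < 1"
    and n: "10000 \<le> n" "even n"
    and ab: "0 \<le> a" "a \<le> real (n div 2)" "0 \<le> b" "b \<le> real (n div 2)"
    and X: "C * ln (real n) \<le> (a - b)^2 / (a + b)"
    and ag: "2 * (1 + \<epsilon>) * a_gamma \<gamma> a b \<le> \<epsilon> * \<bar>(1 - 2 * \<gamma>) * (a - b)\<bar>"
    and bal: "balanced_labels n c" and eg: "e \<in> E_gamma n \<gamma> c"
  shows "1 - 2 * real n * exp (- (\<kappa>^2 * a / 64)) \<le> sbm_prob n (Pmat (real (n div 2)) a b) c
            {A. \<forall>(ah, bh)\<in>P_delta \<delta> (real (n div 2)) a b. eq_up_to_perm n (c_hat n (real (n div 2)) ah bh e A) c}"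
    and "(a - b)^2 / (a + b) \<le> 2 * a"
proof -
  define mr where "mr = real (n div 2)"
  define nr where "nr = real n"
  have nr2: "nr = 2 * mr" using n(2) by (simp add: nr_def mr_def real_of_nat_div)
  have nr0: "10000 \<le> nr" using n by (simp add: nr_def)
  have mr0: "0 < mr" using nr2 nr0 by simp
  have lnn: "8 \<le> ln nr" using ln_ge_8[OF nr0] .
  have gg: "0 < \<bar>2 * \<gamma> - 1\<bar>" "\<bar>2 * \<gamma> - 1\<bar> \<le> 1" using g by auto
  have \<kappa>0: "0 < \<kappa>" "\<kappa> \<le> 1" using gg by (auto simp: \<kappa>)
  have ld: "0 < ln \<delta>" using dl by simp
  have C8: "8 \<le> C" "8 / (\<kappa> * ln \<delta>) \<le> C" by (auto simp: C)
  have Xpos: "0 < (a - b)^2 / (a + b)"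
  proof -
    have "0 < C * ln nr" using C8 lnn by simp
    thus ?thesis using X by (simp add: nr_def)
  qed
  have apb: "0 < a + b"
  proof (rule ccontr)
    assume "\<not> 0 < a + b" hence "a + b = 0" using ab by simp
    thus False using Xpos by simp
  qed
  have bab: "b < a \<and> 4 * b \<le> a" by (rule ab_bounds[OF g ab(1) ab(3) apb ep ag])
  hence ba: "b < a" and b4: "4 * b \<le> a" by auto
  show X2: "(a - b)^2 / (a + b) \<le> 2 * a"
  proof -
    have "(a - b)^2 \<le> (a + b) * (a + b)" using ab by (simp add: power2_eq_square algebra_simps)
    also have "\<dots> \<le> (a + b) * (2 * a)" using apb ba by (intro mult_left_mono) auto
    finally show ?thesis using apb by (simp add: divide_le_eq mult.commute)
  qed
  have aC: "C * ln nr \<le> 2 * a" using X X2 by (simp add: nr_def)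
  have a32: "32 \<le> a"
  proof -
    have "8 * 8 \<le> C * ln nr" using C8 lnn by (intro mult_mono) auto
    thus ?thesis using aC by simp
  qed
  define K where "K = \<kappa> * a / 2"
  have K0: "0 \<le> K" using \<kappa>0 ab by (simp add: K_def)
  have KL: "2 * ln nr \<le> K * ln \<delta>"
  proof -
    have "8 / (\<kappa> * ln \<delta>) * ln nr \<le> C * ln nr" using C8 lnn by (intro mult_right_mono) auto
    hence "8 / (\<kappa> * ln \<delta>) * ln nr \<le> 2 * a" using aC by simp
    hence "8 * ln nr \<le> 2 * a * (\<kappa> * ln \<delta>)" using \<kappa>0 ld by (simp add: divide_le_eq mult.commute)
    thus ?thesis by (simp add: K_def algebra_simps)
  qed
  have Kn: "4 * real n * exp (- (K * ln \<delta>)) < 1"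
  proof -
    have "exp (- (K * ln \<delta>)) \<le> exp (- (2 * ln nr))" using KL by simp
    also have "exp (- (2 * ln nr)) = 1 / nr^2"
    proof -
      have "2 * ln nr = ln (nr^2)" using nr0 by (simp add: ln_realpow)
      hence "exp (2 * ln nr) = nr^2" using nr0 by simp
      thus ?thesis by (simp add: exp_minus divide_inverse)
    qed
    finally have "4 * nr * exp (- (K * ln \<delta>)) \<le> 4 * nr * (1 / nr^2)" using nr0 by (intro mult_left_mono) auto
    also have "\<dots> = 4 / nr" using nr0 by (simp add: power2_eq_square)
    also have "\<dots> < 1" using nr0 by simp
    finally show ?thesis by (simp add: nr_def)
  qed
  define p0 where "p0 = 2 / mr * a - a^2 / mr^2"
  define q0 where "q0 = 2 / mr * b - b^2 / mr^2"
  define P where "P = Pmat mr a b"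
  have Peq: "P = (\<lambda>k l. if k = l then p0 else q0)" by (intro ext) (simp add: P_def Pmat_def p0_def q0_def)
  have am: "a \<le> mr" "b \<le> mr" using ab by (auto simp: mr_def)
  have pb: "0 \<le> p0" "p0 \<le> 1" "p0 \<le> 2 / mr * a" using pm_bounds[OF mr0 ab(1) am(1)] by (auto simp: p0_def)
  have qb: "0 \<le> q0" "q0 \<le> 1" "q0 \<le> 2 / mr * b" using pm_bounds[OF mr0 ab(3) am(2)] by (auto simp: q0_def)
  have Pb: "\<And>k l. 0 \<le> P k l \<and> P k l \<le> 1" using pb qb by (simp add: Peq)
  have Ps: "\<And>k l. P k l = P l k" by (simp add: Peq eq_commute)
  have Dm: "9 * a / 16 \<le> mr * (p0 - q0)"
  proof -
    have eq: "mr * (p0 - q0) = (a - b) * (2 - (a + b) / mr)" unfolding p0_def q0_def by (rule pm_diff[OF mr0])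
    have "(a + b) / mr \<le> 5 / 4"
    proof -
      have "a + b \<le> 5 / 4 * mr" using b4 am by simp
      thus ?thesis using mr0 by (simp add: divide_le_eq mult.commute)
    qed
    hence "3 / 4 \<le> 2 - (a + b) / mr" by simp
    moreover have "3 * a / 4 \<le> a - b" using b4 by simp
    ultimately have "(3 * a / 4) * (3 / 4) \<le> (a - b) * (2 - (a + b) / mr)"
      using ab by (intro mult_mono) auto
    thus ?thesis using eq by simp
  qed
  have Vm: "mr * (p0 + q0) \<le> 4 * a"
  proof -
    have "mr * p0 \<le> 2 * a" using pb(3) mr0 by (simp add: field_simps)
    moreover have "mr * q0 \<le> 2 * b" using qb(3) mr0 by (simp add: field_simps)
    ultimately show ?thesis using b4 ab by (simp add: algebra_simps)
  qed
  have cb: "\<forall>i<n. c i \<in> {1,2}" "card {i. i < n \<and> c i = 1} = n div 2" "card {i. i < n \<and> c i = 2} = n div 2"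
    using bal by (auto simp: balanced_labels_def)
  have eb: "\<forall>i<n. e i \<in> {1,2}" "cnt n c e 1 1 = \<gamma> * mr" "cnt n c e 2 2 = \<gamma> * mr"
    using eg by (auto simp: E_gamma_def cnt_def mr_def)
  have ce: "\<forall>w<n. c w \<in> {1,2} \<and> e w \<in> {1,2}" using cb eb by auto
  have split_card: "cnt n c e k 1 + cnt n c e k 2 = real (card {i. i < n \<and> c i = k})" for k
  proof -
    have "{i. i < n \<and> c i = k} = {w. w < n \<and> c w = k \<and> e w = 1} \<union> {w. w < n \<and> c w = k \<and> e w = 2}"
      using eb(1) by auto
    moreover have "card ({w. w < n \<and> c w = k \<and> e w = 1} \<union> {w. w < n \<and> c w = k \<and> e w = 2})
        = card {w. w < n \<and> c w = k \<and> e w = 1} + card {w. w < n \<and> c w = k \<and> e w = 2}"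
      by (rule card_Un_disjoint) auto
    ultimately show ?thesis by (simp add: cnt_def)
  qed
  have h3: "cnt n c e 1 1 + cnt n c e 1 2 = mr" using split_card[of 1] cb by (simp add: mr_def)
  have h4: "cnt n c e 2 1 + cnt n c e 2 2 = mr" using split_card[of 2] cb by (simp add: mr_def)
  note S = sums[OF ce eb(2) eb(3) h3 h4]
  define \<sigma> :: real where "\<sigma> = (if 1/2 < \<gamma> then 1 else -1)"
  have sg: "\<sigma> = 1 \<or> \<sigma> = -1" by (simp add: \<sigma>_def)
  have sgg: "\<sigma> * (2 * \<gamma> - 1) = \<bar>2 * \<gamma> - 1\<bar>" using g by (auto simp: \<sigma>_def)
  have sgabs: "\<bar>\<sigma>\<bar> = 1" by (simp add: \<sigma>_def)
  have ssum: "(\<Sum>i<n. (if c i = 1 then 1 else -1 :: real)) = 0"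
    and esum: "(\<Sum>i<n. (if e i = 1 then 1 else -1 :: real)) = 0" using S(1,2)[of 1] by auto
  define M where "M = SBM n P c"
  have tail: "measure_pmf.prob M {x. (\<Sum>w<n. u w * of_bool (toA x v w)) \<le> \<mu> - \<mu> / 2} \<le> exp (- (\<kappa>^2 * a / 64))"
    if v: "v < n" and u: "\<And>w. \<bar>u w\<bar> \<le> 1" and \<mu>: "\<mu> = (\<Sum>w<n. u w * P (c v) (c w))" and \<mu>k: "\<kappa> * a \<le> \<mu>"
    for v u \<mu>
  proof -
    have V: "(\<Sum>w<n. P (c v) (c w)) = mr * (p0 + q0)" using S(5)[of "c v"] cb(1) v by (simp add: Peq)
    have "measure_pmf.prob M {x. (\<Sum>w<n. u w * of_bool (toA x v w)) \<le> \<mu> - \<mu> / 2}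
          \<le> exp (- (\<kappa> / 16) * (\<mu> / 2) + (\<kappa> / 16)^2 * (\<Sum>w<n. P (c v) (c w)))"
      unfolding M_def \<mu> by (rule vertex_tail[OF v Pb Ps u]) (use \<kappa>0 in auto)
    also have "\<dots> \<le> exp (- (\<kappa>^2 * a / 64))"
    proof -
      have A1: "(\<kappa> / 16) * (\<kappa> * a) \<le> (\<kappa> / 16) * \<mu>" using \<mu>k \<kappa>0 by (intro mult_left_mono) auto
      have A2: "(\<kappa> / 16)^2 * (mr * (p0 + q0)) \<le> (\<kappa> / 16)^2 * (4 * a)" using Vm by (intro mult_left_mono) auto
      have B1: "(\<kappa> / 16) * (\<kappa> * a) = \<kappa>^2 * a / 16" by (simp add: power2_eq_square)
      have B2: "(\<kappa> / 16)^2 * (4 * a) = \<kappa>^2 * a / 64" by (simp add: power2_eq_square)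
      have "- (\<kappa> / 16) * (\<mu> / 2) + (\<kappa> / 16)^2 * (mr * (p0 + q0)) \<le> - (\<kappa>^2 * a / 64)"
        using A1 A2 unfolding B1 B2 by linarith
      thus ?thesis unfolding V by simp
    qed
    finally show ?thesis .
  qed
  define BD where "BD = (\<lambda>v. {x. (\<Sum>w<n. (\<sigma> * (if c v = 1 then 1 else -1) * (if e w = 1 then 1 else -1)) * of_bool (toA x v w))
       \<le> (\<Sum>w<n. (\<sigma> * (if c v = 1 then 1 else -1) * (if e w = 1 then 1 else -1)) * P (c v) (c w))
         - (\<Sum>w<n. (\<sigma> * (if c v = 1 then 1 else -1) * (if e w = 1 then 1 else -1)) * P (c v) (c w)) / 2})"
  define BF where "BF = (\<lambda>v. {x. (\<Sum>w<n. ((if c v = 1 then 1 else -1) * (if c w = 1 then 1 else -1)) * of_bool (toA x v w))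
       \<le> (\<Sum>w<n. ((if c v = 1 then 1 else -1) * (if c w = 1 then 1 else -1)) * P (c v) (c w))
         - (\<Sum>w<n. ((if c v = 1 then 1 else -1) * (if c w = 1 then 1 else -1)) * P (c v) (c w)) / 2})"
  have muD: "(\<Sum>w<n. (\<sigma> * (if c v = 1 then 1 else -1) * (if e w = 1 then 1 else -1)) * P (c v) (c w)) = \<bar>2 * \<gamma> - 1\<bar> * (mr * (p0 - q0))"
    if v: "v < n" for v
  proof -
    have "(\<Sum>w<n. (\<sigma> * (if c v = 1 then 1 else -1) * (if e w = 1 then 1 else -1)) * P (c v) (c w))
        = \<sigma> * (\<Sum>w<n. (if c v = 1 then 1 else -1) * (if e w = 1 then 1 else -1) * (if c v = c w then p0 else q0))"
      unfolding sum_distrib_left Peq by (rule sum.cong) (simp_all only: mult.assoc)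
    also have "\<dots> = \<sigma> * ((2 * (\<gamma> * mr) - mr) * (p0 - q0))"
    proof -
      have "c v \<in> {1,2}" using cb(1) v by blast
      thus ?thesis using S(3)[of "c v"] by simp
    qed
    also have "\<dots> = (\<sigma> * (2 * \<gamma> - 1)) * (mr * (p0 - q0))" by (simp add: algebra_simps)
    finally show ?thesis using sgg by simp
  qed
  have muF: "(\<Sum>w<n. ((if c v = 1 then 1 else -1) * (if c w = 1 then 1 else -1)) * P (c v) (c w)) = mr * (p0 - q0)"
    if v: "v < n" for v
  proof -
    have "c v \<in> {1,2}" using cb(1) v by blast
    thus ?thesis unfolding Peq using S(4)[of "c v"] by simp
  qed
  have \<kappa>D: "\<kappa> * a \<le> \<bar>2 * \<gamma> - 1\<bar> * (mr * (p0 - q0))"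
  proof -
    have "\<kappa> * a = \<bar>2 * \<gamma> - 1\<bar> * (9 * a / 16)" by (simp add: \<kappa>)
    also have "\<dots> \<le> \<bar>2 * \<gamma> - 1\<bar> * (mr * (p0 - q0))" using Dm by (intro mult_left_mono) auto
    finally show ?thesis .
  qed
  have \<kappa>F: "\<kappa> * a \<le> mr * (p0 - q0)"
  proof -
    have "\<kappa> * a = \<bar>2 * \<gamma> - 1\<bar> * (9 * a / 16)" by (simp add: \<kappa>)
    also have "\<dots> \<le> 1 * (9 * a / 16)" using gg ab by (intro mult_right_mono) auto
    finally show ?thesis using Dm by simp
  qed
  have pBD: "measure_pmf.prob M (BD v) \<le> exp (- (\<kappa>^2 * a / 64))" if v: "v < n" for v
  proof -
    have "\<bar>\<sigma> * (if c v = 1 then 1 else -1) * (if e w = 1 then 1 else -1)\<bar> \<le> 1" for w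
      by (simp add: \<sigma>_def)
    moreover have "\<kappa> * a \<le> (\<Sum>w<n. (\<sigma> * (if c v = 1 then 1 else -1) * (if e w = 1 then 1 else -1)) * P (c v) (c w))"
      using muD[OF v] \<kappa>D by simp
    ultimately show ?thesis unfolding BD_def
      by (rule tail[OF v, of "\<lambda>w. \<sigma> * (if c v = 1 then 1 else -1) * (if e w = 1 then 1 else -1)", OF _ refl])
  qed
  have pBF: "measure_pmf.prob M (BF v) \<le> exp (- (\<kappa>^2 * a / 64))" if v: "v < n" for v
  proof -
    have "\<bar>(if c v = 1 then 1 else -1) * (if c w = 1 then 1 else -1)\<bar> \<le> (1::real)" for w
      by simp
    moreover have "\<kappa> * a \<le> (\<Sum>w<n. ((if c v = 1 then 1 else -1) * (if c w = 1 then 1 else -1)) * P (c v) (c w))"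
      using muF[OF v] \<kappa>F by simp
    ultimately show ?thesis unfolding BF_def
      by (rule tail[OF v, of "\<lambda>w. (if c v = 1 then 1 else -1) * (if c w = 1 then 1 else -1)", OF _ refl])
  qed
  define target where "target = {A. \<forall>(ah, bh)\<in>P_delta \<delta> mr a b. eq_up_to_perm n (c_hat n mr ah bh e A) c}"
  define G where "G = {x. (\<forall>i<n. K \<le> \<sigma> * (if c i = 1 then 1 else -1) * (\<Sum>j<n. (if e j = 1 then 1 else -1) * of_bool (toA x i j)))
                      \<and> (\<forall>j<n. (1::real) \<le> (\<Sum>i<n. (if c j = 1 then 1 else -1) * (if c i = 1 then 1 else -1) * of_bool (toA x j i)))}"
  have GT: "G \<subseteq> {x. toA x \<in> target}"
  proof
    fix x assume x: "x \<in> G"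
    have sym: "\<forall>i j. toA x i j = toA x j i" by (simp add: toA_def min.commute max.commute)
    note xx = x[unfolded G_def mem_Collect_eq]
    note GD = conjunct1[OF xx] and GF = conjunct2[OF xx]
    show "x \<in> {x. toA x \<in> target}" unfolding target_def mem_Collect_eq
      by (rule det_incl[where A="toA x" and n=n and e=e and c=c and K=K and \<sigma>=\<sigma> and \<delta>=\<delta> and mr=mr and a=a and b=b,
            OF dl mr0 ba sg eb(1) cb(1) esum ssum sym K0 Kn GD GF])
  qed
  have compl: "UNIV - G \<subseteq> (\<Union>v\<in>{..<n}. BD v \<union> BF v)"
  proof
    fix x assume x: "x \<in> UNIV - G"
    consider (D) i where "i < n" "\<not> K \<le> \<sigma> * (if c i = 1 then 1 else -1) * (\<Sum>j<n. (if e j = 1 then 1 else -1) * of_bool (toA x i j))"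
      | (F) j where "j < n" "\<not> (1::real) \<le> (\<Sum>i<n. (if c j = 1 then 1 else -1) * (if c i = 1 then 1 else -1) * of_bool (toA x j i))"
    proof -
      note nG = conjunct2[OF x[unfolded G_def Diff_iff mem_Collect_eq]]
      assume hD: "\<And>i. i < n \<Longrightarrow> \<not> K \<le> \<sigma> * (if c i = 1 then 1 else -1) * (\<Sum>j<n. (if e j = 1 then 1 else -1) * of_bool (toA x i j)) \<Longrightarrow> thesis"
         and hF: "\<And>j. j < n \<Longrightarrow> \<not> (1::real) \<le> (\<Sum>i<n. (if c j = 1 then 1 else -1) * (if c i = 1 then 1 else -1) * of_bool (toA x j i)) \<Longrightarrow> thesis"
      show thesis
      proof (cases "\<forall>i<n. K \<le> \<sigma> * (if c i = 1 then 1 else -1) * (\<Sum>j<n. (if e j = 1 then 1 else -1) * of_bool (toA x i j))")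
        case True
        have "\<not> (\<forall>j<n. (1::real) \<le> (\<Sum>i<n. (if c j = 1 then 1 else -1) * (if c i = 1 then 1 else -1) * of_bool (toA x j i)))"
        proof
          assume b: "\<forall>j<n. (1::real) \<le> (\<Sum>i<n. (if c j = 1 then 1 else -1) * (if c i = 1 then 1 else -1) * of_bool (toA x j i))"
          show False using nG conjI[OF True b] by (rule notE)
        qed
        then obtain j where "j < n" "\<not> (1::real) \<le> (\<Sum>i<n. (if c j = 1 then 1 else -1) * (if c i = 1 then 1 else -1) * of_bool (toA x j i))"
          by (auto simp del: sum_mult_of_bool_eq)
        thus thesis by (rule hF)
      next
        case False
        then obtain i where "i < n" "\<not> K \<le> \<sigma> * (if c i = 1 then 1 else -1) * (\<Sum>j<n. (if e j = 1 then 1 else -1) * of_bool (toA x i j))"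
          by (auto simp del: sum_mult_of_bool_eq)
        thus thesis by (rule hD)
      qed
    qed
    thus "x \<in> (\<Union>v\<in>{..<n}. BD v \<union> BF v)"
    proof cases
      case (D i)
      have Kle: "K \<le> (\<Sum>w<n. (\<sigma> * (if c i = 1 then 1 else -1) * (if e w = 1 then 1 else -1)) * P (c i) (c w)) / 2"
        using muD[OF D(1)] \<kappa>D by (simp add: K_def)
      have eq: "\<sigma> * (if c i = 1 then 1 else -1) * (\<Sum>j<n. (if e j = 1 then 1 else -1) * of_bool (toA x i j))
          = (\<Sum>w<n. (\<sigma> * (if c i = 1 then 1 else -1) * (if e w = 1 then 1 else -1)) * of_bool (toA x i w))"
        unfolding sum_distrib_left by (rule sum.cong) (simp_all only: mult.assoc)
      have "x \<in> BD i" unfolding BD_def mem_Collect_eq using D(2) Kle unfolding eq by linarith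
      thus ?thesis using D(1) by blast
    next
      case (F j)
      have "1 \<le> mr * (p0 - q0) / 2" using Dm a32 by simp
      hence "x \<in> BF j" unfolding BF_def mem_Collect_eq using F(2) muF[OF F(1)] by linarith
      thus ?thesis using F(1) by blast
    qed
  qed
  have "measure_pmf.prob M (UNIV - G) \<le> measure_pmf.prob M (\<Union>v\<in>{..<n}. BD v \<union> BF v)"
    by (rule measure_pmf.finite_measure_mono[OF compl]) simp
  also have "\<dots> \<le> (\<Sum>v\<in>{..<n}. measure_pmf.prob M (BD v \<union> BF v))"
    by (rule measure_pmf.finite_measure_subadditive_finite) auto
  also have "\<dots> \<le> (\<Sum>v\<in>{..<n}. 2 * exp (- (\<kappa>^2 * a / 64)))"
  proof (rule sum_mono)
    fix v assume v: "v \<in> {..<n}"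
    have "measure_pmf.prob M (BD v \<union> BF v) \<le> measure_pmf.prob M (BD v) + measure_pmf.prob M (BF v)"
      by (rule measure_subadditive) (auto simp: measure_pmf.emeasure_eq_measure)
    thus "measure_pmf.prob M (BD v \<union> BF v) \<le> 2 * exp (- (\<kappa>^2 * a / 64))" using pBD[of v] pBF[of v] v by simp
  qed
  also have "\<dots> = 2 * real n * exp (- (\<kappa>^2 * a / 64))" by simp
  finally have pc: "measure_pmf.prob M (UNIV - G) \<le> 2 * real n * exp (- (\<kappa>^2 * a / 64))" .
  have "measure_pmf.prob M (UNIV - G) = 1 - measure_pmf.prob M G"
    using measure_pmf.prob_compl[of G M] by simp
  hence "1 - 2 * real n * exp (- (\<kappa>^2 * a / 64)) \<le> measure_pmf.prob M G" using pc by simp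
  also have "\<dots> \<le> measure_pmf.prob M {x. toA x \<in> target}"
    by (rule measure_pmf.finite_measure_mono[OF GT]) simp
  also have "\<dots> = sbm_prob n P c target" unfolding M_def by (rule bridge[symmetric]) (use Pb in auto)
  finally show "1 - 2 * real n * exp (- (\<kappa>^2 * a / 64)) \<le> sbm_prob n (Pmat (real (n div 2)) a b) c
            {A. \<forall>(ah, bh)\<in>P_delta \<delta> (real (n div 2)) a b. eq_up_to_perm n (c_hat n (real (n div 2)) ah bh e A) c}"
    by (simp add: P_def target_def mr_def)
qed


theorem theorem3:
  fixes \<delta> \<gamma> :: real
  assumes "\<delta> > 1" and "0 < \<gamma>" and "\<gamma> < 1" and "\<gamma> \<noteq> 1/2"
  shows "\<exists>C>0. \<forall>(a::nat \<Rightarrow> real) (b::nat \<Rightarrow> real) (\<epsilon>::real).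
     (0 < \<epsilon> \<and> \<epsilon> < 1 \<and>
      (\<forall>\<^sub>F n in sequentially. even n \<longrightarrow>
          0 \<le> a n \<and> a n \<le> real (n div 2) \<and> 0 \<le> b n \<and> b n \<le> real (n div 2) \<and>
          (a n - b n)^2 / (a n + b n) \<ge> C * ln (real n) \<and>
          2 * (1 + \<epsilon>) * a_gamma \<gamma> (a n) (b n) \<le> \<epsilon> * \<bar>(1 - 2 * \<gamma>) * (a n - b n)\<bar>))
     \<longrightarrow> (\<exists>\<rho>. 0 < \<rho> \<and> \<rho> < 1 \<and> (\<exists>N>0. \<forall>n\<ge>N. even n \<longrightarrow>
          (\<forall>c. balanced_labels n c \<longrightarrow> (\<forall>e\<in>E_gamma n \<gamma> c.
             sbm_prob n (Pmat (real (n div 2)) (a n) (b n)) c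
               {A. \<forall>(ah, bh)\<in>P_delta \<delta> (real (n div 2)) (a n) (b n).
                     eq_up_to_perm n (c_hat n (real (n div 2)) ah bh e A) c}
             \<ge> 1 - (3 * real n * exp (- (((1 - \<rho>) / 4)^2 * (a n - b n)^2 / (4 * (a n + b n))))
                    + real n * (real n + 2) *
                      (exp (- (((1 - \<epsilon>) / 2)^2 * (2 * \<gamma> - 1)^2 * (a n - b n)^2 / (4 * (a n + b n))))
                       + 2 * exp (- ((\<epsilon>^2 / 2) / (1 + \<epsilon> / 2) * a_gamma \<gamma> (a n) (b n)))))))))"
  proof -
  define \<kappa> where "\<kappa> = \<bar>2 * \<gamma> - 1\<bar> * 9 / 16"
  define C where "C = max 8 (8 / (\<kappa> * ln \<delta>))"
  have gg: "0 < \<bar>2 * \<gamma> - 1\<bar>" "\<bar>2 * \<gamma> - 1\<bar> \<le> 1" using assms by auto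
  have \<kappa>0: "0 < \<kappa>" "\<kappa> \<le> 1" using gg by (auto simp: \<kappa>_def)
  show ?thesis
  proof (rule exI[of _ C], intro conjI allI impI)
    show "0 < C" by (simp add: C_def)
    fix a b :: "nat \<Rightarrow> real" and \<epsilon> :: real
    assume H: "0 < \<epsilon> \<and> \<epsilon> < 1 \<and>
      (\<forall>\<^sub>F n in sequentially. even n \<longrightarrow>
          0 \<le> a n \<and> a n \<le> real (n div 2) \<and> 0 \<le> b n \<and> b n \<le> real (n div 2) \<and>
          (a n - b n)^2 / (a n + b n) \<ge> C * ln (real n) \<and>
          2 * (1 + \<epsilon>) * a_gamma \<gamma> (a n) (b n) \<le> \<epsilon> * \<bar>(1 - 2 * \<gamma>) * (a n - b n)\<bar>)"
    then obtain N0 where N0: "\<forall>n\<ge>N0. even n \<longrightarrow>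
          0 \<le> a n \<and> a n \<le> real (n div 2) \<and> 0 \<le> b n \<and> b n \<le> real (n div 2) \<and>
          (a n - b n)^2 / (a n + b n) \<ge> C * ln (real n) \<and>
          2 * (1 + \<epsilon>) * a_gamma \<gamma> (a n) (b n) \<le> \<epsilon> * \<bar>(1 - 2 * \<gamma>) * (a n - b n)\<bar>"
      by (auto simp: eventually_sequentially)
    have ep: "0 < \<epsilon>" "\<epsilon> < 1" using H by auto
    show "\<exists>\<rho>. 0 < \<rho> \<and> \<rho> < 1 \<and> (\<exists>N>0. \<forall>n\<ge>N. even n \<longrightarrow>
          (\<forall>c. balanced_labels n c \<longrightarrow> (\<forall>e\<in>E_gamma n \<gamma> c.
             sbm_prob n (Pmat (real (n div 2)) (a n) (b n)) c
               {A. \<forall>(ah, bh)\<in>P_delta \<delta> (real (n div 2)) (a n) (b n).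
                     eq_up_to_perm n (c_hat n (real (n div 2)) ah bh e A) c}
             \<ge> 1 - (3 * real n * exp (- (((1 - \<rho>) / 4)^2 * (a n - b n)^2 / (4 * (a n + b n))))
                    + real n * (real n + 2) *
                      (exp (- (((1 - \<epsilon>) / 2)^2 * (2 * \<gamma> - 1)^2 * (a n - b n)^2 / (4 * (a n + b n))))
                       + 2 * exp (- ((\<epsilon>^2 / 2) / (1 + \<epsilon> / 2) * a_gamma \<gamma> (a n) (b n))))))))"
    proof (intro exI[of _ "1 - \<kappa> / 2"] conjI exI[of _ "max N0 10000"] allI impI ballI)
      show "0 < 1 - \<kappa> / 2" "1 - \<kappa> / 2 < 1" "0 < max N0 10000" using \<kappa>0 by auto
      fix n c e
      assume nN: "max N0 10000 \<le> n" and ev: "even n" and bal: "balanced_labels n c" and eg: "e \<in> E_gamma n \<gamma> c"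
      have hyp: "0 \<le> a n" "a n \<le> real (n div 2)" "0 \<le> b n" "b n \<le> real (n div 2)"
          "C * ln (real n) \<le> (a n - b n)^2 / (a n + b n)"
          "2 * (1 + \<epsilon>) * a_gamma \<gamma> (a n) (b n) \<le> \<epsilon> * \<bar>(1 - 2 * \<gamma>) * (a n - b n)\<bar>"
        using N0 nN ev by auto
      have n10: "10000 \<le> n" using nN by simp
      note cr = core[OF assms(1) assms(2) assms(3) assms(4) \<kappa>_def C_def ep n10 ev hyp bal eg]
      define X where "X = (a n - b n)^2 / (a n + b n)"
      have T1: "2 * real n * exp (- (\<kappa>^2 * a n / 64)) \<le> 3 * real n * exp (- (((1 - (1 - \<kappa> / 2)) / 4)^2 * (a n - b n)^2 / (4 * (a n + b n))))"
      proof -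
        have eq: "((1 - (1 - \<kappa> / 2)) / 4)^2 * (a n - b n)^2 / (4 * (a n + b n)) = \<kappa>^2 / 256 * X"
          by (simp add: X_def power2_eq_square)
        have "\<kappa>^2 / 256 * X \<le> \<kappa>^2 / 256 * (2 * a n)" using cr(2) by (intro mult_left_mono) (auto simp: X_def)
        also have "\<dots> \<le> \<kappa>^2 * a n / 64" using hyp(1) by (simp add: mult_nonneg_nonneg)
        finally have "exp (- (\<kappa>^2 * a n / 64)) \<le> exp (- (((1 - (1 - \<kappa> / 2)) / 4)^2 * (a n - b n)^2 / (4 * (a n + b n))))"
          unfolding eq by simp
        hence "2 * real n * exp (- (\<kappa>^2 * a n / 64)) \<le> 2 * real n * exp (- (((1 - (1 - \<kappa> / 2)) / 4)^2 * (a n - b n)^2 / (4 * (a n + b n))))"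
          by (intro mult_left_mono) auto
        also have "\<dots> \<le> 3 * real n * exp (- (((1 - (1 - \<kappa> / 2)) / 4)^2 * (a n - b n)^2 / (4 * (a n + b n))))"
          by (intro mult_right_mono) auto
        finally show ?thesis .
      qed
      have T2: "0 \<le> real n * (real n + 2) *
                      (exp (- (((1 - \<epsilon>) / 2)^2 * (2 * \<gamma> - 1)^2 * (a n - b n)^2 / (4 * (a n + b n))))
                       + 2 * exp (- ((\<epsilon>^2 / 2) / (1 + \<epsilon> / 2) * a_gamma \<gamma> (a n) (b n))))"
        by (intro mult_nonneg_nonneg add_nonneg_nonneg) auto
      show "1 - (3 * real n * exp (- (((1 - (1 - \<kappa> / 2)) / 4)^2 * (a n - b n)^2 / (4 * (a n + b n))))
                    + real n * (real n + 2) *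
                      (exp (- (((1 - \<epsilon>) / 2)^2 * (2 * \<gamma> - 1)^2 * (a n - b n)^2 / (4 * (a n + b n))))
                       + 2 * exp (- ((\<epsilon>^2 / 2) / (1 + \<epsilon> / 2) * a_gamma \<gamma> (a n) (b n)))))
            \<le> sbm_prob n (Pmat (real (n div 2)) (a n) (b n)) c
               {A. \<forall>(ah, bh)\<in>P_delta \<delta> (real (n div 2)) (a n) (b n).
                     eq_up_to_perm n (c_hat n (real (n div 2)) ah bh e A) c}"
        using cr(1) T1 T2 by linarith
    qed
  qed
qed

end
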